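(* Let $R$ be an inp-minimal integral domain with maximal ideal $\mathfrak M$. If $R$ contains an infinite set $F$ such that $F-F\subseteq R^\times\cup\{0\}$, then $R$ is a valuation ring. In particular: (1) if $R/\mathfrak M$ is infinite then $R$ is a valuation ring; (2) if $R$ has an infinite subring which is a field then $R$ is a valuation ring.
   Context: Rings are commutative with identity. Inp-minimal: the theory of $R$ in the language of rings has burden $1$ (such a domain is local). A domain $R$ is a valuation ring if for every nonzero $x$ in its fraction field, $x\in R$ or $x^{-1}\in R$. *)

theory Defs
  imports Main "HOL-Computational_Algebra.Fraction_Field"
begin

datatype rterm = Var nat | Zero | One | Add rterm rterm | Neg rterm | Mul rterm rterm

datatype rform = Eq rterm rterm | Neg_f rform | Conj rform rform | Ex nat rform

fun teval :: "(nat \<Rightarrow> 'a::comm_ring_1) \<Rightarrow> rterm \<Rightarrow> 'a" where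
  "teval e (Var v) = e v"
| "teval e Zero = 0"
| "teval e One = 1"
| "teval e (Add s t) = teval e s + teval e t"
| "teval e (Neg s) = - teval e s"
| "teval e (Mul s t) = teval e s * teval e t"

fun sat :: "(nat \<Rightarrow> 'a::comm_ring_1) \<Rightarrow> rform \<Rightarrow> bool" where
  "sat e (Eq s t) = (teval e s = teval e t)"
| "sat e (Neg_f p) = (\<not> sat e p)"
| "sat e (Conj p q) = (sat e p \<and> sat e q)"
| "sat e (Ex v p) = (\<exists>a. sat (e(v := a)) p)"

text \<open>Formulas phi(x; y) use variable 0 as the object variable x (a single variable,
  since the burden of the theory is the burden of the home sort x = x);
  all other variables are parameters, supplied by an assignment b.\<close>

definition inp_pattern ::
  "nat \<Rightarrow> (nat \<Rightarrow> rform) \<Rightarrow> (nat \<Rightarrow> nat) \<Rightarrow> nat \<Rightarrow> (nat \<Rightarrow> nat \<Rightarrow> nat \<Rightarrow> 'a::comm_ring_1) \<Rightarrow> bool"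
where
  "inp_pattern d phi k n b \<longleftrightarrow>
     (\<forall>i<d. \<forall>J. J \<subseteq> {..<n} \<and> card J = k i \<longrightarrow>
         \<not> (\<exists>a::'a. \<forall>j\<in>J. sat ((b i j)(0 := a)) (phi i))) \<and>
     (\<forall>f. (\<forall>i<d. f i < n) \<longrightarrow> (\<exists>a::'a. \<forall>i<d. sat ((b i (f i))(0 := a)) (phi i)))"

text \<open>By compactness (the theory of R is complete), an inp-pattern of depth d with
  infinite rows exists in the monster model of Th(R) iff for the same formulas and
  the same k, finite patterns of every width n exist in R itself.\<close>

definition burden_ge :: "'a::comm_ring_1 itself \<Rightarrow> nat \<Rightarrow> bool" where
  "burden_ge (_::'a itself) d \<longleftrightarrow>
     (\<exists>phi k. \<forall>n. \<exists>b :: nat \<Rightarrow> nat \<Rightarrow> nat \<Rightarrow> 'a. inp_pattern d phi k n b)"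

definition inp_minimal :: "'a::comm_ring_1 itself \<Rightarrow> bool" where
  "inp_minimal T \<longleftrightarrow> burden_ge T 1 \<and> \<not> burden_ge T 2"

definition valuation_ring :: "'a::idom itself \<Rightarrow> bool" where
  "valuation_ring (_::'a itself) \<longleftrightarrow>
     (\<forall>x :: 'a fract. x \<noteq> 0 \<longrightarrow>
        x \<in> range (\<lambda>r::'a. Fract r 1) \<or> inverse x \<in> range (\<lambda>r::'a. Fract r 1))"

definition is_ideal :: "'a::comm_ring_1 set \<Rightarrow> bool" where
  "is_ideal I \<longleftrightarrow> 0 \<in> I \<and> (\<forall>a\<in>I. \<forall>b\<in>I. a + b \<in> I) \<and> (\<forall>r. \<forall>a\<in>I. r * a \<in> I)"

definition maximal_ideal :: "'a::comm_ring_1 set \<Rightarrow> bool" where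
  "maximal_ideal M \<longleftrightarrow> is_ideal M \<and> M \<noteq> UNIV \<and>
     (\<forall>I. is_ideal I \<and> M \<subseteq> I \<longrightarrow> I = M \<or> I = UNIV)"

definition residue_field :: "'a::comm_ring_1 set \<Rightarrow> 'a set set" where
  "residue_field M = UNIV // {(a, b). a - b \<in> M}"

definition subring :: "'a::comm_ring_1 set \<Rightarrow> bool" where
  "subring S \<longleftrightarrow> 0 \<in> S \<and> 1 \<in> S \<and>
     (\<forall>a\<in>S. \<forall>b\<in>S. a + b \<in> S \<and> a * b \<in> S) \<and> (\<forall>a\<in>S. - a \<in> S)"

definition subfield :: "'a::comm_ring_1 set \<Rightarrow> bool" where
  "subfield S \<longleftrightarrow> subring S \<and> (\<forall>a\<in>S. a \<noteq> 0 \<longrightarrow> (\<exists>b\<in>S. a * b = 1))"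

end

theory Submission
  imports Defs
begin

lemma all_less2: "(\<forall>i<(2::nat). P i) \<longleftrightarrow> P 0 \<and> P 1"
  by (auto simp: less_2_cases_iff)

definition phiC :: rform where
  "phiC = Ex 3 (Eq (Var 0) (Add (Var 1) (Mul (Var 2) (Var 3))))"

lemma sat_phiC: "sat e phiC \<longleftrightarrow> e 2 dvd (e 0 - e 1)"
  unfolding phiC_def by (auto simp: dvd_def algebra_simps eq_diff_eq)

lemma burden2:
  fixes T :: "'a::idom itself"
  assumes "\<And>n::nat. \<exists>(p::nat \<Rightarrow> nat \<Rightarrow> 'a) q. (\<forall>i<2. \<forall>j<n. \<forall>j'<n. j \<noteq> j' \<longrightarrow> \<not> q i dvd (p i j - p i j'))
     \<and> (\<forall>f. (\<forall>i<2. f i < n) \<longrightarrow> (\<exists>x::'a. \<forall>i<2. q i dvd (x - p i (f i))))"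
  shows "burden_ge T 2"
proof -
  define phi where "phi = (\<lambda>_::nat. phiC)"
  define k where "k = (\<lambda>_::nat. 2::nat)"
  have "\<forall>n. \<exists>b :: nat \<Rightarrow> nat \<Rightarrow> nat \<Rightarrow> 'a. inp_pattern 2 phi k n b"
  proof
    fix n :: nat
    obtain p :: "nat \<Rightarrow> nat \<Rightarrow> 'a" and q :: "nat \<Rightarrow> 'a" where H1: "\<forall>i<2. \<forall>j<n. \<forall>j'<n. j \<noteq> j' \<longrightarrow> \<not> q i dvd (p i j - p i j')"
      and H2: "\<forall>f. (\<forall>i<2. f i < n) \<longrightarrow> (\<exists>x::'a. \<forall>i<2. q i dvd (x - p i (f i)))"
      using assms[where n=n] by blast
    define b :: "nat \<Rightarrow> nat \<Rightarrow> nat \<Rightarrow> 'a" where "b = (\<lambda>i j v. if v = 1 then p i j else q i)"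
    have sat: "\<And>i j a. sat ((b i j)(0 := a)) (phi i) \<longleftrightarrow> q i dvd (a - p i j)"
      by (simp add: phi_def sat_phiC b_def)
    have "inp_pattern 2 phi k n b"
      unfolding inp_pattern_def
    proof (intro conjI allI impI)
      fix i J assume i: "i < 2" and J: "J \<subseteq> {..<n} \<and> card J = k i"
      then obtain j j' where JJ: "J = {j, j'}" "j \<noteq> j'" by (auto simp: k_def card_2_iff)
      show "\<not> (\<exists>a. \<forall>j\<in>J. sat ((b i j)(0 := a)) (phi i))"
      proof
        assume "\<exists>a. \<forall>j\<in>J. sat ((b i j)(0 := a)) (phi i)"
        then obtain a where "q i dvd (a - p i j)" "q i dvd (a - p i j')" using sat JJ by auto
        then have "q i dvd ((a - p i j) - (a - p i j'))" by (rule dvd_diff)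
        then have "q i dvd (p i j' - p i j)" by simp
        moreover have "j < n" "j' < n" using J JJ by auto
        ultimately show False using H1 i JJ by blast
      qed
    next
      fix f :: "nat \<Rightarrow> nat" assume "\<forall>i<2. f i < n"
      then obtain x where "\<forall>i<2. q i dvd (x - p i (f i))" using H2 by blast
      then show "\<exists>a. \<forall>i<2. sat ((b i (f i))(0 := a)) (phi i)" using sat by blast
    qed
    then show "\<exists>b :: nat \<Rightarrow> nat \<Rightarrow> nat \<Rightarrow> 'a. inp_pattern 2 phi k n b" by blast
  qed
  then show ?thesis unfolding burden_ge_def by blast
qed

lemma unit_dvd_cancel:
  fixes u :: "'a::idom"
  assumes "u dvd 1" "b dvd u * a" shows "b dvd a"
  proof -
  obtain v where v: "1 = u * v" using assms(1) by (auto simp: dvd_def)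
  have "b dvd u * a * v" using assms(2) by (rule dvd_mult2)
  then show ?thesis by (simp add: algebra_simps flip: v)
qed

lemma val_of_F:
  fixes T :: "'a::idom itself" and F :: "'a set"
  assumes nb: "\<not> burden_ge T 2" and inf: "infinite F"
    and FU: "\<forall>a\<in>F. \<forall>b\<in>F. (a - b) dvd 1 \<or> a - b = 0"
  shows "valuation_ring T"
proof (rule ccontr)
  assume "\<not> valuation_ring T"
  then obtain x :: "'a fract" where x0: "x \<noteq> 0" and nx: "x \<notin> range (\<lambda>r. Fract r 1)"
    and ni: "inverse x \<notin> range (\<lambda>r. Fract r 1)" unfolding valuation_ring_def by blast
  obtain a b where x: "x = Fract a b" and b0: "b \<noteq> 0" by (cases x) auto
  have a0: "a \<noteq> 0" using x0 x by (auto simp: fract_collapse)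
  have nba: "\<not> b dvd a"
  proof
    assume "b dvd a" then obtain k where "a = b * k" by (auto simp: dvd_def)
    then have "x = Fract k 1" using x b0 by (simp add: eq_fract)
    then have "x \<in> range (\<lambda>r. Fract r 1)" by (rule image_eqI[where x=k]) simp_all
    then show False using nx by blast
  qed
  have nab: "\<not> a dvd b"
  proof
    assume "a dvd b" then obtain k where "b = a * k" by (auto simp: dvd_def)
    then have "inverse x = Fract k 1" using x a0 by (simp add: eq_fract)
    then have "inverse x \<in> range (\<lambda>r. Fract r 1)" by (rule image_eqI[where x=k]) simp_all
    then show False using ni by blast
  qed
  obtain c :: "nat \<Rightarrow> 'a" where cinj: "inj c" and cF: "range c \<subseteq> F"
    using infinite_countable_subset[OF inf] by blast
  have cu: "(c j - c j') dvd 1" if "j \<noteq> j'" for j j'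
  proof -
    have "c j \<noteq> c j'" using cinj that by (auto dest: injD)
    moreover have cj: "c j \<in> F" "c j' \<in> F" using cF by auto
    ultimately show ?thesis using bspec[OF bspec[OF FU cj(1)] cj(2)] by simp
  qed
  have "burden_ge T 2"
  proof (rule burden2)
    fix n :: nat
    define Q where "Q = (\<lambda>i::nat. if i = 0 then b else a)"
    define P where "P = (\<lambda>(i::nat) (j::nat). if i = 0 then c j * a else c j * b)"
    have A0: "\<not> b dvd (c j * a - c j' * a)" if "j \<noteq> j'" for j j'
    proof
      assume "b dvd (c j * a - c j' * a)"
      moreover have "c j * a - c j' * a = (c j - c j') * a" by (simp add: left_diff_distrib)
      ultimately have "b dvd (c j - c j') * a" by simp
      then show False using unit_dvd_cancel[OF cu[OF that]] nba by blast
    qed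
    have A1: "\<not> a dvd (c j * b - c j' * b)" if "j \<noteq> j'" for j j'
    proof
      assume "a dvd (c j * b - c j' * b)"
      moreover have "c j * b - c j' * b = (c j - c j') * b" by (simp add: left_diff_distrib)
      ultimately have "a dvd (c j - c j') * b" by simp
      then show False using unit_dvd_cancel[OF cu[OF that]] nab by blast
    qed
    have A: "\<forall>i<2. \<forall>j<n. \<forall>j'<n. j \<noteq> j' \<longrightarrow> \<not> Q i dvd (P i j - P i j')"
      unfolding all_less2 P_def Q_def using A0 A1 by simp
    have B: "\<forall>f. (\<forall>i<2. f i < n) \<longrightarrow> (\<exists>x::'a. \<forall>i<2. Q i dvd (x - P i (f i)))"
    proof (intro allI impI)
      fix f :: "nat \<Rightarrow> nat"
      define x where "x = c (f 0) * a + c (f 1) * b"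
      have "x - c (f 0) * a = c (f 1) * b" unfolding x_def by simp
      then have d1: "b dvd x - c (f 0) * a" by simp
      have "x - c (f 1) * b = c (f 0) * a" unfolding x_def by simp
      then have d2: "a dvd x - c (f 1) * b" by simp
      show "\<exists>x::'a. \<forall>i<2. Q i dvd (x - P i (f i))"
        using d1 d2 unfolding all_less2 P_def Q_def by auto
    qed
    show "\<exists>(p::nat \<Rightarrow> nat \<Rightarrow> 'a) q. (\<forall>i<2. \<forall>j<n. \<forall>j'<n. j \<noteq> j' \<longrightarrow> \<not> q i dvd (p i j - p i j'))
     \<and> (\<forall>f. (\<forall>i<2. f i < n) \<longrightarrow> (\<exists>x::'a. \<forall>i<2. q i dvd (x - p i (f i))))"
      using A B by blast
  qed
  then show False using nb by blast
qed


lemma pow_nd_lt: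
  fixes v :: "'a::idom"
  assumes nu: "\<not> v dvd 1" and v0: "v \<noteq> 0" and jk: "j < k" "k < n"
  shows "\<not> v ^ n dvd (v ^ j - v ^ k)"
proof
  assume d: "v ^ n dvd (v ^ j - v ^ k)"
  have e1: "v ^ j - v ^ k = v ^ j * (1 - v ^ (k - j))"
    using jk by (simp add: algebra_simps flip: power_add)
  have e2: "v ^ n = v ^ j * v ^ (n - j)"
    using jk by (simp flip: power_add)
  have "v ^ (n - j) dvd (1 - v ^ (k - j))"
    using d v0 unfolding e1 e2 by simp
  moreover have "v dvd v ^ (n - j)" using jk by (simp add: dvd_power)
  ultimately have "v dvd (1 - v ^ (k - j))" by (rule dvd_trans[rotated])
  moreover have "v dvd v ^ (k - j)" using jk by (simp add: dvd_power)
  ultimately have "v dvd (1 - v ^ (k - j)) + v ^ (k - j)" by (rule dvd_add)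
  then show False using nu by simp
qed

lemma pow_nd:
  fixes v :: "'a::idom"
  assumes nu: "\<not> v dvd 1" and v0: "v \<noteq> 0" and "j < n" "k < n" "j \<noteq> k"
  shows "\<not> v ^ n dvd (v ^ j - v ^ k)"
proof (cases "j < k")
  case True then show ?thesis using pow_nd_lt assms by blast
next
  case False then have "k < j" using assms by simp
  then have "\<not> v ^ n dvd (v ^ k - v ^ j)" using pow_nd_lt assms by blast
  then show ?thesis by (metis dvd_minus_iff minus_diff_eq)
qed

lemma comax_pow:
  fixes a b :: "'a::comm_ring_1"
  assumes "a * s + b * t = 1"
  shows "\<exists>s t. a ^ n * s + b * t = 1"
proof (induction n)
  case 0 then show ?case by (intro exI[of _ 1] exI[of _ 0]) simp
next
  case (Suc n)
  then obtain s' t' where h: "a ^ n * s' + b * t' = 1" by blast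
  have "1 = (a ^ n * s' + b * t') * (a * s + b * t)" using h assms by simp
  also have "\<dots> = a ^ Suc n * (s' * s) + b * (a ^ n * s' * t + t' * a * s + t' * b * t)"
    by (simp add: algebra_simps)
  finally show ?case by metis
qed

lemma local_of:
  fixes T :: "'a::idom itself"
  assumes nb: "\<not> burden_ge T 2"
  shows "(u::'a) dvd 1 \<or> (1 - u) dvd 1"
proof (rule ccontr)
  assume "\<not> (u dvd 1 \<or> (1 - u) dvd 1)"
  then have nu: "\<not> u dvd 1" and nw: "\<not> (1 - u) dvd 1" by auto
  have u0: "u \<noteq> 0" using nw by auto
  have w0: "1 - u \<noteq> 0" using nu by auto
  have "burden_ge T 2"
  proof (rule burden2)
    fix n :: nat
    obtain s t where st: "u ^ n * s + (1 - u) * t = 1"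
      using comax_pow[of u 1 "1 - u" 1 n] by auto
    obtain s' t' where st': "(1 - u) ^ n * s' + u ^ n * t' = 1"
      using comax_pow[of "1 - u" t "u ^ n" s n] st by (auto simp: algebra_simps)
    show "\<exists>(p::nat \<Rightarrow> nat \<Rightarrow> 'a) q. (\<forall>i<2. \<forall>j<n. \<forall>j'<n. j \<noteq> j' \<longrightarrow> \<not> q i dvd (p i j - p i j'))
     \<and> (\<forall>f. (\<forall>i<2. f i < n) \<longrightarrow> (\<exists>x::'a. \<forall>i<2. q i dvd (x - p i (f i))))"
    proof -
      define Q where "Q = (\<lambda>i::nat. if i = 0 then u ^ n else (1 - u) ^ n)"
      define P where "P = (\<lambda>(i::nat) (j::nat). if i = 0 then u ^ j else (1 - u) ^ j)"
      have A: "\<forall>i<2. \<forall>j<n. \<forall>j'<n. j \<noteq> j' \<longrightarrow> \<not> Q i dvd (P i j - P i j')"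
        unfolding all_less2 P_def Q_def using pow_nd[OF nu u0] pow_nd[OF nw w0] by simp
      have B: "\<forall>f. (\<forall>i<2. f i < n) \<longrightarrow> (\<exists>x::'a. \<forall>i<2. Q i dvd (x - P i (f i)))"
      proof (intro allI impI)
        fix f :: "nat \<Rightarrow> nat"
        define x where "x = u ^ f 0 + u ^ n * t' * ((1 - u) ^ f 1 - u ^ f 0)"
        have "x - u ^ f 0 = u ^ n * (t' * ((1 - u) ^ f 1 - u ^ f 0))"
          unfolding x_def by (simp add: algebra_simps)
        then have d1: "u ^ n dvd x - u ^ f 0" by simp
        have "x - (1 - u) ^ f 1 = (u ^ f 0 - (1 - u) ^ f 1) * (1 - u ^ n * t')"
          unfolding x_def by (simp add: algebra_simps)
        also have "1 - u ^ n * t' = (1 - u) ^ n * s'" using st' by (simp add: algebra_simps eq_diff_eq)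
        finally have d2: "(1 - u) ^ n dvd x - (1 - u) ^ f 1" by simp
        show "\<exists>x::'a. \<forall>i<2. Q i dvd (x - P i (f i))"
          using d1 d2 unfolding all_less2 P_def Q_def by auto
      qed
      show ?thesis using A B by blast
    qed
  qed
  then show False using nb by blast
qed


lemma nonunit_in_M:
  fixes M :: "'a::comm_ring_1 set"
  assumes M: "maximal_ideal M" and loc: "\<And>u::'a. u dvd 1 \<or> (1 - u) dvd 1"
    and r: "r \<notin> M"
  shows "r dvd 1"
proof -
  have iM: "is_ideal M" and MU: "M \<noteq> UNIV"
    and mx: "\<And>I. is_ideal I \<Longrightarrow> M \<subseteq> I \<Longrightarrow> I = M \<or> I = UNIV"
    using M unfolding maximal_ideal_def by blast+
  define I where "I = {m + r * s | m s. m \<in> M}"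
  have "is_ideal I"
    unfolding is_ideal_def
  proof (intro conjI ballI allI)
    show "0 \<in> I" unfolding I_def using iM by (auto simp: is_ideal_def intro!: exI[of _ 0])
  next
    fix a b assume "a \<in> I" "b \<in> I"
    then obtain m1 s1 m2 s2 where "a = m1 + r * s1" "b = m2 + r * s2" "m1 \<in> M" "m2 \<in> M"
      unfolding I_def by blast
    moreover have "m1 + m2 \<in> M" using iM \<open>m1 \<in> M\<close> \<open>m2 \<in> M\<close> unfolding is_ideal_def by blast
    moreover have "a + b = (m1 + m2) + r * (s1 + s2)" using \<open>a = m1 + r * s1\<close> \<open>b = m2 + r * s2\<close>
      by (simp add: algebra_simps)
    ultimately show "a + b \<in> I" unfolding I_def by blast
  next
    fix c a assume "a \<in> I"
    then obtain m1 s1 where "a = m1 + r * s1" "m1 \<in> M"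
      unfolding I_def by blast
    moreover have "c * m1 \<in> M" using iM \<open>m1 \<in> M\<close> unfolding is_ideal_def by blast
    moreover have "c * a = (c * m1) + r * (c * s1)" using \<open>a = m1 + r * s1\<close>
      by (simp add: algebra_simps)
    ultimately show "c * a \<in> I" unfolding I_def by blast
  qed
  moreover have "M \<subseteq> I"
  proof
    fix x assume "x \<in> M"
    moreover have "x = x + r * 0" by simp
    ultimately show "x \<in> I" unfolding I_def by blast
  qed
  moreover have "r \<in> I"
  proof -
    have "r = 0 + r * 1" by simp
    moreover have "(0::'a) \<in> M" using iM unfolding is_ideal_def by blast
    ultimately show ?thesis unfolding I_def by blast
  qed
  ultimately have "I = UNIV" using mx r by blast
  then have "1 \<in> I" by simp
  then obtain m s where ms: "1 = m + r * s" "m \<in> M" unfolding I_def by blast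
  have "\<not> m dvd 1"
  proof
    assume "m dvd 1" then obtain v where v: "1 = m * v" by (auto simp: dvd_def)
    have "z \<in> M" for z
    proof -
      have "z * v * m \<in> M" using iM ms(2) by (simp add: is_ideal_def)
      moreover have "z * v * m = z" by (metis v mult.assoc mult.commute mult_1_right)
      ultimately show ?thesis by simp
    qed
    then show False using MU by blast
  qed
  then have "(1 - m) dvd 1" using loc by blast
  moreover have "1 - m = r * s" using ms(1) by (simp add: algebra_simps)
  ultimately show "r dvd 1" by (metis dvd_mult_left)
qed

lemma F_of_residue:
  fixes M :: "'a::comm_ring_1 set"
  assumes M: "maximal_ideal M" and loc: "\<And>u::'a. u dvd 1 \<or> (1 - u) dvd 1"
    and inf: "infinite (residue_field M)"
  shows "\<exists>F :: 'a set. infinite F \<and> (\<forall>a\<in>F. \<forall>b\<in>F. (a - b) dvd 1 \<or> a - b = 0)"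
proof -
  have iM: "is_ideal M" using M unfolding maximal_ideal_def by blast
  define rel where "rel = {(a, b). a - b \<in> M}"
  have eq: "equiv UNIV rel"
  proof (rule equivI)
    show "refl rel"
    proof (rule reflI)
      fix x :: 'a show "(x, x) \<in> rel" using iM by (simp add: rel_def is_ideal_def)
    qed
    show "sym rel" unfolding rel_def sym_def
    proof (clarify)
      fix a b assume "a - b \<in> M"
      then have "(-1) * (a - b) \<in> M" using iM unfolding is_ideal_def by blast
      then show "b - a \<in> M" by simp
    qed
    show "rel \<subseteq> UNIV \<times> UNIV" by simp
    show "trans rel" unfolding rel_def trans_def
    proof (clarify)
      fix a b c assume "a - b \<in> M" "b - c \<in> M"
      then have "(a - b) + (b - c) \<in> M" using iM unfolding is_ideal_def by blast
      then show "a - c \<in> M" by simp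
    qed
  qed
  define Q where "Q = residue_field M"
  have Qd: "Q = UNIV // rel" unfolding Q_def residue_field_def rel_def by simp
  define rep where "rep = (\<lambda>C::'a set. SOME x. x \<in> C)"
  have repin: "rep C \<in> C" if "C \<in> Q" for C
  proof -
    have "C \<noteq> {}" using that Qd eq in_quotient_imp_non_empty by blast
    then show ?thesis unfolding rep_def by (simp add: some_in_eq)
  qed
  have same: "C1 = C2" if "C1 \<in> Q" "C2 \<in> Q" "x \<in> C1" "y \<in> C2" "(x, y) \<in> rel" for C1 C2 x y
    using that Qd eq quotient_eqI by metis
  have "inj_on rep Q"
  proof (rule inj_onI)
    fix C1 C2 assume "C1 \<in> Q" "C2 \<in> Q" "rep C1 = rep C2"
    moreover have "(rep C1, rep C2) \<in> rel" using \<open>rep C1 = rep C2\<close> iM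
      unfolding rel_def by (auto simp: is_ideal_def)
    ultimately show "C1 = C2" using same repin by blast
  qed
  then have infF: "infinite (rep ` Q)" using inf Q_def finite_imageD by blast
  have "\<forall>a\<in>rep ` Q. \<forall>b\<in>rep ` Q. (a - b) dvd 1 \<or> a - b = 0"
  proof (intro ballI)
    fix a b assume "a \<in> rep ` Q" "b \<in> rep ` Q"
    then obtain C1 C2 where C: "C1 \<in> Q" "C2 \<in> Q" "a = rep C1" "b = rep C2" by blast
    show "(a - b) dvd 1 \<or> a - b = 0"
    proof (cases "a - b \<in> M")
      case True
      then have "C1 = C2" using same[OF C(1,2) repin[OF C(1)] repin[OF C(2)]] C unfolding rel_def by simp
      then show ?thesis using C by simp
    next
      case False then show ?thesis using nonunit_in_M[OF M loc] by blast
    qed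
  qed
  then show ?thesis using infF by blast
qed

lemma F_of_subfield:
  fixes S :: "'a::comm_ring_1 set"
  assumes "subfield S" "infinite S"
  shows "\<exists>F :: 'a set. infinite F \<and> (\<forall>a\<in>F. \<forall>b\<in>F. (a - b) dvd 1 \<or> a - b = 0)"
proof (intro exI conjI)
  show "infinite S" by fact
  show "\<forall>a\<in>S. \<forall>b\<in>S. (a - b) dvd 1 \<or> a - b = 0"
  proof (intro ballI)
    fix a b assume ab: "a \<in> S" "b \<in> S"
    have "a - b \<in> S" using assms(1) ab unfolding subfield_def subring_def
      by (metis diff_conv_add_uminus)
    then show "(a - b) dvd 1 \<or> a - b = 0" using assms(1) unfolding subfield_def
      by (metis dvdI)
  qed
qed

theorem mainTheorem8:
  fixes T :: "'a::idom itself" and M :: "'a set"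
  assumes inp: "inp_minimal T"
    and M: "maximal_ideal M"
  shows "((\<exists>F :: 'a set. infinite F \<and>
            (\<forall>a\<in>F. \<forall>b\<in>F. (a - b) dvd 1 \<or> a - b = 0)) \<longrightarrow> valuation_ring T)
       \<and> (infinite (residue_field M) \<longrightarrow> valuation_ring T)
       \<and> ((\<exists>S :: 'a set. subfield S \<and> infinite S) \<longrightarrow> valuation_ring T)"
proof -
  have nb: "\<not> burden_ge T 2" using inp unfolding inp_minimal_def by blast
  have loc: "\<And>u::'a. u dvd 1 \<or> (1 - u) dvd 1" using local_of[OF nb] by blast
  have P1: "(\<exists>F :: 'a set. infinite F \<and>
            (\<forall>a\<in>F. \<forall>b\<in>F. (a - b) dvd 1 \<or> a - b = 0)) \<longrightarrow> valuation_ring T"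
    using val_of_F[OF nb] by blast
  show ?thesis
    using P1 F_of_residue[OF M loc] F_of_subfield by blast
qed

end
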